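(* Let $z_0\in\mathbb{C}$ and let $g(z),h(z)$ be functions analytic in a neighbourhood of $z_0$ with $g'(z_0)\neq 0$ and $h(z_0)\neq 0$. Let $f(z)=g(z)+h(z)(z-z_0)^{3/2}$ near $z_0$, and put $u_0=g(z_0)$. Then the relation $u=f(z)$ can be locally inverted near $(z_0,u_0)$: there exist functions $G(u),H(u)$ analytic in a neighbourhood of $u_0$ such that the inverse is given by $$z=G(u)+H(u)(u-u_0)^{3/2},$$ and these satisfy $G(u_0)=z_0$, $G'(u_0)=1/g'(z_0)$ and $H(u_0)=-h(z_0)/g'(z_0)^{5/2}$ (in particular $H(u_0)\neq 0$).
   Context: Here $(z-z_0)^{3/2}$ and $(u-u_0)^{3/2}$ denote a fixed branch of the power function in a slit neighbourhood of $z_0$, respectively $u_0$. A function of the form $g(z)+h(z)(z-z_0)^{3/2}$ with $g,h$ analytic at $z_0$ and $h(z_0)\ne 0$ is said to have a $3/2$-singularity at $z_0$. *)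

theory Defs
  imports "HOL-Analysis.Analysis"
begin

definition slit_disc :: "complex \<Rightarrow> real \<Rightarrow> complex \<Rightarrow> complex set" where
  "slit_disc c r d = ball c r - {c + complex_of_real t * d | t. 0 \<le> t}"

definition pow32_branch :: "(complex \<Rightarrow> complex) \<Rightarrow> complex \<Rightarrow> real \<Rightarrow> complex \<Rightarrow> bool" where
  "pow32_branch p c r d \<longleftrightarrow> d \<noteq> 0 \<and> p holomorphic_on slit_disc c r d \<and>
     (\<forall>z\<in>slit_disc c r d. (p z)^2 = (z - c)^3)"

end

theory Submission
  imports Defs "HOL-Complex_Analysis.Complex_Analysis"
begin

lemma sq_eq_cases: "(x::complex)^2 = y^2 \<Longrightarrow> x = y \<or> x = - y"
  by (metis power2_eq_iff)

lemma even_sqrt_holo: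
  fixes E :: "complex \<Rightarrow> complex"
  assumes hol: "E holomorphic_on ball 0 \<rho>" and ev: "\<And>t. t \<in> ball 0 \<rho> \<Longrightarrow> E (-t) = E t"
    and rho: "\<rho> > 0"
  shows "(\<lambda>w. E (csqrt w)) holomorphic_on ball 0 (\<rho>^2)"
proof -
  have cs: "csqrt w \<in> ball 0 \<rho>" if "w \<in> ball 0 (\<rho>^2)" for w
  proof -
    have "norm w < \<rho>^2" using that by simp
    then have "sqrt (norm w) < \<rho>" using rho
      by (metis abs_of_pos real_sqrt_abs real_sqrt_less_iff)
    then show ?thesis by simp
  qed
  have cs2: "\<i> * csqrt (-w) \<in> ball 0 \<rho>" if "w \<in> ball 0 (\<rho>^2)" for w
    using cs[of "-w"] that by (simp add: norm_mult)
  have eq: "E (csqrt w) = E (\<i> * csqrt (-w))" if "w \<in> ball 0 (\<rho>^2)" for w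
  proof -
    have "(\<i> * csqrt (-w))^2 = (csqrt w)^2" by (simp add: power_mult_distrib)
    then have "\<i> * csqrt (-w) = csqrt w \<or> \<i> * csqrt (-w) = - csqrt w" by (rule sq_eq_cases)
    then show ?thesis using ev[OF cs[OF that]] by auto
  qed
  have h1: "(\<lambda>w. E (csqrt w)) holomorphic_on (ball 0 (\<rho>^2) - \<real>\<^sub>\<le>\<^sub>0)"
  proof -
    have "(E \<circ> csqrt) holomorphic_on (ball 0 (\<rho>^2) - \<real>\<^sub>\<le>\<^sub>0)"
      apply (rule holomorphic_on_compose_gen[where t="ball 0 \<rho>"])
      apply (rule holomorphic_on_subset[OF holomorphic_on_csqrt]) apply blast
      apply (rule hol) using cs by blast
    then show ?thesis by (simp add: o_def)
  qed
  have h2: "(\<lambda>w. E (\<i> * csqrt (-w))) holomorphic_on (ball 0 (\<rho>^2) - \<real>\<^sub>\<ge>\<^sub>0)"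
  proof -
    have "(E \<circ> (\<lambda>w. \<i> * csqrt (-w))) holomorphic_on (ball 0 (\<rho>^2) - \<real>\<^sub>\<ge>\<^sub>0)"
      apply (rule holomorphic_on_compose_gen[where t="ball 0 \<rho>"])
      apply (intro holomorphic_intros)
      apply (auto simp: complex_nonpos_Reals_iff complex_nonneg_Reals_iff)[1]
      apply (rule hol) using cs2 by blast
    then show ?thesis by (simp add: o_def)
  qed
  have h2': "(\<lambda>w. E (csqrt w)) holomorphic_on (ball 0 (\<rho>^2) - \<real>\<^sub>\<ge>\<^sub>0)"
    by (rule holomorphic_transform[OF h2]) (use eq in auto)
  have h3: "(\<lambda>w. E (csqrt w)) holomorphic_on (ball 0 (\<rho>^2) - {0})"
  proof -
    have "ball (0::complex) (\<rho>^2) - {0} = (ball 0 (\<rho>^2) - \<real>\<^sub>\<le>\<^sub>0) \<union> (ball 0 (\<rho>^2) - \<real>\<^sub>\<ge>\<^sub>0)"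
      unfolding set_eq_iff Diff_iff Un_iff singleton_iff complex_nonpos_Reals_iff complex_nonneg_Reals_iff
      by (auto simp: complex_eq_iff)
    then show ?thesis
      using holomorphic_on_Un[OF h1 h2'] by (simp add: open_Diff)
  qed
  show ?thesis
  proof (rule no_isolated_singularity'[OF _ h3])
    fix z assume "z \<in> {0::complex}"
    then have z: "z = 0" by simp
    have "(csqrt \<longlongrightarrow> 0) (at 0)"
    proof -
      have "((\<lambda>w. sqrt (norm w)) \<longlongrightarrow> sqrt (norm (0::complex))) (at 0)"
        by (intro tendsto_intros) (simp add: tendsto_norm_zero_iff)
      then have "((\<lambda>w. norm (csqrt w)) \<longlongrightarrow> 0) (at 0)" by simp
      then show ?thesis using tendsto_norm_zero_iff by blast
    qed
    moreover have "isCont E 0"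
      using holomorphic_on_imp_continuous_on[OF hol] rho continuous_on_eq_continuous_at[of "ball 0 \<rho>" E] by simp
    ultimately have "((\<lambda>w. E (csqrt w)) \<longlongrightarrow> E 0) (at 0)"
      using isCont_tendsto_compose by blast
    then show "((\<lambda>w. E (csqrt w)) \<longlongrightarrow> E (csqrt z)) (at z within ball 0 (\<rho>^2))"
      using z tendsto_within_subset by fastforce
  qed auto
qed

lemma sign_const:
  fixes F :: "'a::topological_space \<Rightarrow> real"
  assumes "connected S" "continuous_on S F" "\<And>z. z \<in> S \<Longrightarrow> F z \<noteq> 0" "z1 \<in> S" "z \<in> S"
  shows "F z * F z1 > 0"
proof (rule ccontr)
  assume "\<not> F z * F z1 > 0"
  then have "F z * F z1 < 0" using assms(3)[OF assms(4)] assms(3)[OF assms(5)]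
    by (simp add: not_less le_less)
  then have "(F z \<le> 0 \<and> 0 \<le> F z1) \<or> (F z1 \<le> 0 \<and> 0 \<le> F z)"
    by (auto simp: mult_less_0_iff)
  moreover have c: "connected (F ` S)" using assms connected_continuous_image by blast
  ultimately obtain w where "w \<in> F ` S" "inner 1 w = (0::real)"
    using connected_ivt_hyperplane[OF c, of _ _ 1 0] assms(4,5) by (auto; blast)
  then show False using assms(3) by auto
qed

lemma slit_starlike:
  assumes "d \<noteq> 0" "r > 0"
  shows "starlike (slit_disc c r d)"
proof -
  define \<alpha> where "\<alpha> = - (r/2) / norm d"
  have \<alpha>: "\<alpha> < 0" using assms by (simp add: \<alpha>_def)
  define a where "a = c + d * of_real \<alpha>"
  have aS: "a \<in> slit_disc c r d"
  proof -
    have "norm (d * of_real \<alpha>) = r/2" using assms unfolding norm_mult norm_of_real \<alpha>_def by simp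
    then have "dist c a < r" using assms by (simp add: a_def dist_norm)
    moreover have "a \<noteq> c + complex_of_real t * d" if "0 \<le> t" for t
    proof
      assume "a = c + complex_of_real t * d"
      then have "d * of_real \<alpha> = d * of_real t" by (simp add: a_def mult.commute)
      then have "\<alpha> = t" using assms by simp
      then show False using \<alpha> that by simp
    qed
    ultimately show ?thesis by (auto simp: slit_disc_def)
  qed
  have "closed_segment a x \<subseteq> slit_disc c r d" if xS: "x \<in> slit_disc c r d" for x
  proof
    fix y assume "y \<in> closed_segment a x"
    then obtain l where l: "0 \<le> l" "l \<le> 1" "y = (1 - l) *\<^sub>R a + l *\<^sub>R x"
      by (auto simp: closed_segment_def)
    have xb: "x \<in> ball c r" and xr: "\<And>t. 0 \<le> t \<Longrightarrow> x \<noteq> c + complex_of_real t * d"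
      using xS by (auto simp: slit_disc_def)
    have ab: "a \<in> ball c r" using aS by (simp add: slit_disc_def)
    have yb: "y \<in> ball c r"
      using convex_ball[of c r] ab xb l unfolding convex_def by (metis diff_add_cancel diff_ge_0_iff_ge)
    have "y \<noteq> c + complex_of_real s * d" if s: "0 \<le> s" for s
    proof
      assume ys: "y = c + complex_of_real s * d"
      define \<xi> where "\<xi> = (x - c) / d"
      have xe: "x = c + d * \<xi>" using assms by (simp add: \<xi>_def)
      have "y = c + d * (of_real ((1 - l) * \<alpha>) + of_real l * \<xi>)"
        using l(3) by (simp add: a_def xe scaleR_conv_of_real algebra_simps)
      then have "d * (of_real ((1 - l) * \<alpha>) + of_real l * \<xi>) = d * of_real s"
        using ys by (metis add_left_cancel mult.commute)
      then have e: "of_real ((1 - l) * \<alpha>) + of_real l * \<xi> = of_real s"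
        using assms by simp
      show False
      proof (cases "l = 0")
        case True
        then show ?thesis using e \<alpha> s by simp
      next
        case False
        then have "\<xi> = of_real ((s - (1 - l) * \<alpha>) / l)"
          using e by (simp add: field_simps)
        moreover have "(s - (1 - l) * \<alpha>) / l \<ge> 0"
        proof -
          have "(1 - l) * \<alpha> \<le> 0" using l \<alpha> by (simp add: mult_nonneg_nonpos)
          then show ?thesis using l s by simp
        qed
        ultimately show False using xr xe by (metis mult.commute)
      qed
    qed
    then show "y \<in> slit_disc c r d" using yb by (auto simp: slit_disc_def)
  qed
  then show ?thesis unfolding starlike_def using aS by blast
qed

lemma hol_comp:
  "g holomorphic_on T \<Longrightarrow> f holomorphic_on S \<Longrightarrow> (\<And>x. x \<in> S \<Longrightarrow> f x \<in> T) \<Longrightarrow> (\<lambda>x. g (f x)) holomorphic_on S"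
  using holomorphic_on_compose_gen[of f S g T] by (auto simp: o_def)

lemma local_inv:
  fixes g h :: "complex \<Rightarrow> complex" and z0 c :: complex and r :: real
  assumes r: "r > 0" and hg: "g holomorphic_on ball z0 r" and hh: "h holomorphic_on ball z0 r"
    and c: "c^2 = deriv g z0" "c \<noteq> 0"
  obtains \<rho>0 \<sigma> \<tau> where "\<rho>0 > 0" "\<sigma> holomorphic_on ball 0 \<rho>0" "\<tau> holomorphic_on ball 0 \<rho>0"
    "\<And>t. t \<in> ball 0 \<rho>0 \<Longrightarrow> \<sigma> t = t * \<tau> t"
    "\<And>t. t \<in> ball 0 \<rho>0 \<Longrightarrow> norm (\<sigma> t) ^ 2 < r"
    "\<And>t. t \<in> ball 0 \<rho>0 \<Longrightarrow> g (z0 + \<sigma> t ^ 2) + h (z0 + \<sigma> t ^ 2) * \<sigma> t ^ 3 = g z0 + t^2"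
    "\<tau> 0 = 1 / c" "deriv \<tau> 0 = - h z0 / (2 * c^4)"
proof -
  define g' where "g' = deriv g z0"
  have g'0: "g' \<noteq> 0" using c by (auto simp: g'_def)
  define \<gamma> where "\<gamma> = (\<lambda>z. if z = z0 then deriv g z0 else (g z - g z0) / (z - z0))"
  have h\<gamma>: "\<gamma> holomorphic_on ball z0 r"
    unfolding \<gamma>_def by (rule pole_lemma[OF hg]) (simp add: r)
  have gid: "g (z0 + w) = g z0 + w * \<gamma> (z0 + w)" for w
    by (cases "w = 0") (auto simp: \<gamma>_def)
  define R where "R = sqrt r"
  have R: "R > 0" using r by (simp add: R_def)
  have sqb: "z0 + s^2 \<in> ball z0 r" if "s \<in> ball 0 R" for s
  proof -
    have "norm s < sqrt r" using that by (simp add: R_def)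
    then have "norm s ^ 2 < r" using r by (metis norm_ge_zero real_sqrt_less_iff real_sqrt_pow2_iff real_sqrt_unique
          less_le power2_less_imp_less real_less_rsqrt)
    then show ?thesis by (simp add: dist_norm norm_power)
  qed
  have sqb2: "dist z0 (z0 + s^2) < r" if "norm s < R" for s
    using sqb[of s] that by simp
  define \<phi> where "\<phi> = (\<lambda>s. \<gamma> (z0 + s^2) + h (z0 + s^2) * s)"
  have h\<phi>: "\<phi> holomorphic_on ball 0 R"
    unfolding \<phi>_def
    by (intro holomorphic_intros hol_comp[OF h\<gamma>] hol_comp[OF hh]) (auto simp: sqb2)
  have \<phi>0: "\<phi> 0 = g'" by (simp add: \<phi>_def \<gamma>_def g'_def)
  have d\<phi>: "(\<phi> has_field_derivative h z0) (at 0)"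
  proof -
    have d1: "(\<gamma> has_field_derivative deriv \<gamma> z0) (at (z0 + 0^2))"
      using holomorphic_derivI[OF h\<gamma>] r by simp
    have d2: "(h has_field_derivative deriv h z0) (at (z0 + 0^2))"
      using holomorphic_derivI[OF hh] r by simp
    have i: "((\<lambda>s. z0 + s^2) has_field_derivative 0) (at 0)"
      by (auto intro!: derivative_eq_intros)
    have a: "((\<lambda>s. \<gamma> (z0 + s^2)) has_field_derivative deriv \<gamma> z0 * 0) (at 0)"
      using DERIV_chain2[where f=\<gamma> and g="\<lambda>s. z0 + s^2" and x=0, OF d1 i] .
    have b: "((\<lambda>s. h (z0 + s^2)) has_field_derivative deriv h z0 * 0) (at 0)"
      using DERIV_chain2[where f=h and g="\<lambda>s. z0 + s^2" and x=0, OF d2 i] .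
    have "((\<lambda>s. \<gamma> (z0 + s^2) + h (z0 + s^2) * s) has_field_derivative
       (deriv \<gamma> z0 * 0 + (deriv h z0 * 0 * 0 + 1 * h (z0 + 0^2)))) (at 0)"
      by (intro DERIV_add a DERIV_mult b DERIV_ident)
    then show ?thesis by (simp add: \<phi>_def)
  qed
  obtain r2 where r2: "r2 > 0" "r2 \<le> R" "\<And>s. s \<in> ball 0 r2 \<Longrightarrow> norm (\<phi> s / g' - 1) < 1"
  proof -
    have "isCont \<phi> 0"
      using h\<phi> R holomorphic_on_imp_continuous_on continuous_on_eq_continuous_at[of "ball 0 R" \<phi>] by auto
    then have "isCont (\<lambda>s. \<phi> s / g') 0" using g'0 by (intro continuous_intros)
    then obtain d where d: "d > 0" "\<And>x. dist x 0 < d \<Longrightarrow> dist (\<phi> x / g') (\<phi> 0 / g') < 1"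
      unfolding continuous_at_eps_delta by (meson zero_less_one)
    show ?thesis
      apply (rule that[of "min d R"])
      using d R \<phi>0 g'0 by (auto simp: dist_norm)
  qed
  have npos: "\<phi> s / g' \<notin> \<real>\<^sub>\<le>\<^sub>0" if "s \<in> ball 0 r2" for s
  proof
    assume "\<phi> s / g' \<in> \<real>\<^sub>\<le>\<^sub>0"
    then have "Re (\<phi> s / g') \<le> 0" "Im (\<phi> s / g') = 0" by (auto simp: complex_nonpos_Reals_iff)
    moreover have "norm (\<phi> s / g' - 1) < 1" using r2 that by auto
    ultimately show False
      using abs_Re_le_cmod[of "\<phi> s / g' - 1"] by auto
  qed
  define \<psi> where "\<psi> = (\<lambda>s. c * csqrt (\<phi> s / g'))"
  have h\<psi>: "\<psi> holomorphic_on ball 0 r2"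
    unfolding \<psi>_def
    by (intro holomorphic_intros holomorphic_on_subset[OF h\<phi>]) (use r2 npos g'0 in auto)
  have \<psi>sq: "\<psi> s ^ 2 = \<phi> s" for s
    using c g'0 by (simp add: \<psi>_def power_mult_distrib g'_def)
  have \<psi>0: "\<psi> 0 = c" by (simp add: \<psi>_def \<phi>0 g'0)
  have d\<psi>: "(\<psi> has_field_derivative c * h z0 / (2 * g')) (at 0)"
  proof -
    have "(\<psi> has_field_derivative c * (h z0 / g' / (2 * csqrt (\<phi> 0 / g')))) (at 0)"
    proof -
      have dq: "((\<lambda>s. \<phi> s / g') has_field_derivative h z0 / g') (at 0)"
        by (rule DERIV_cdivide[OF d\<phi>])
      have "\<phi> 0 / g' \<notin> \<real>\<^sub>\<le>\<^sub>0" using npos r2 by auto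
      from DERIV_cmult[OF has_field_derivative_csqrt'[OF dq this], of c]
      show ?thesis unfolding \<psi>_def .
    qed
    then show ?thesis by (simp add: \<phi>0 g'0 mult.commute)
  qed
  define \<Theta> where "\<Theta> = (\<lambda>s. s * \<psi> s)"
  have h\<Theta>: "\<Theta> holomorphic_on ball 0 r2" unfolding \<Theta>_def by (intro holomorphic_intros h\<psi>)
  have d\<Theta>: "deriv \<Theta> 0 = c"
  proof -
    have "(\<Theta> has_field_derivative (1 * \<psi> 0 + (c * h z0 / (2 * g')) * 0)) (at 0)"
      unfolding \<Theta>_def by (intro DERIV_mult DERIV_ident d\<psi>)
    then show ?thesis using \<psi>0 by (simp add: DERIV_imp_deriv)
  qed
  obtain r3 where r3: "r3 > 0" "ball (0::complex) r3 \<subseteq> ball 0 r2" "inj_on \<Theta> (ball 0 r3)"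
  proof -
    have a: "0 \<in> ball (0::complex) r2" using r2 by simp
    have b: "deriv \<Theta> 0 \<noteq> 0" using d\<Theta> c by simp
    show ?thesis using has_complex_derivative_locally_injective[OF h\<Theta> a open_ball b] that by metis
  qed
  have h\<Theta>3: "\<Theta> holomorphic_on ball 0 r3" using holomorphic_on_subset[OF h\<Theta> r3(2)] .
  obtain \<sigma> where \<sigma>: "\<sigma> holomorphic_on (\<Theta> ` ball 0 r3)"
      "\<And>z. z \<in> ball 0 r3 \<Longrightarrow> deriv \<Theta> z * deriv \<sigma> (\<Theta> z) = 1"
      "\<And>z. z \<in> ball 0 r3 \<Longrightarrow> \<sigma> (\<Theta> z) = z"
    using holomorphic_has_inverse[OF h\<Theta>3 _ r3(3)] by auto
  have oimg: "open (\<Theta> ` ball 0 r3)" using open_mapping_thm3[OF h\<Theta>3 _ r3(3)] by simp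
  have T0: "\<Theta> 0 = 0" by (simp add: \<Theta>_def)
  have "0 \<in> \<Theta> ` ball 0 r3" using r3 T0 by (metis centre_in_ball imageI)
  then obtain \<rho>0 where \<rho>0: "\<rho>0 > 0" "ball 0 \<rho>0 \<subseteq> \<Theta> ` ball 0 r3"
    using oimg open_contains_ball by blast
  have \<sigma>0: "\<sigma> 0 = 0" using \<sigma>(3)[of 0] r3 T0 by simp
  have d\<sigma>0: "deriv \<sigma> 0 = 1 / c" using \<sigma>(2)[of 0] r3 T0 d\<Theta> c by (simp add: field_simps)
  have \<sigma>in: "\<sigma> t \<in> ball 0 r3 \<and> \<Theta> (\<sigma> t) = t" if tb: "t \<in> ball 0 \<rho>0" for t
  proof -
    obtain s where "s \<in> ball 0 r3" "t = \<Theta> s" using \<rho>0 tb by blast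
    then show ?thesis using \<sigma>(3) by auto
  qed
  have h\<sigma>: "\<sigma> holomorphic_on ball 0 \<rho>0" using holomorphic_on_subset[OF \<sigma>(1) \<rho>0(2)] .
  define \<tau> where "\<tau> = (\<lambda>t. if t = 0 then deriv \<sigma> 0 else (\<sigma> t - \<sigma> 0) / (t - 0))"
  have h\<tau>: "\<tau> holomorphic_on ball 0 \<rho>0"
    unfolding \<tau>_def by (rule pole_lemma[OF h\<sigma>]) (simp add: \<rho>0)
  have \<sigma>\<tau>: "\<sigma> t = t * \<tau> t" for t
    by (cases "t = 0") (auto simp: \<tau>_def \<sigma>0)
  have \<tau>0: "\<tau> 0 = 1 / c" by (simp add: \<tau>_def d\<sigma>0)
  have nrm: "norm (\<sigma> t) ^ 2 < r" if "t \<in> ball 0 \<rho>0" for t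
  proof -
    have "\<sigma> t \<in> ball 0 R" using \<sigma>in[OF that] r3 r2 by auto
    then show ?thesis using sqb[of "\<sigma> t"] by (simp add: dist_norm norm_power)
  qed
  have main: "g (z0 + \<sigma> t ^ 2) + h (z0 + \<sigma> t ^ 2) * \<sigma> t ^ 3 = g z0 + t^2" if "t \<in> ball 0 \<rho>0" for t
  proof -
    have "g (z0 + \<sigma> t ^ 2) + h (z0 + \<sigma> t ^ 2) * \<sigma> t ^ 3 = g z0 + \<sigma> t ^ 2 * \<phi> (\<sigma> t)"
      by (simp add: gid \<phi>_def algebra_simps power2_eq_square power3_eq_cube)
    also have "\<dots> = g z0 + (\<Theta> (\<sigma> t))^2"
      by (simp add: \<Theta>_def power_mult_distrib \<psi>sq)
    also have "\<dots> = g z0 + t^2" using \<sigma>in[OF that] by simp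
    finally show ?thesis .
  qed
  have one: "\<tau> t * \<psi> (\<sigma> t) = 1" if "t \<in> ball 0 \<rho>0" for t
  proof (cases "t = 0")
    case True then show ?thesis using \<tau>0 \<sigma>0 \<psi>0 c by simp
  next
    case False
    have "t * (\<tau> t * \<psi> (\<sigma> t)) = \<Theta> (\<sigma> t)" by (simp add: \<Theta>_def \<sigma>\<tau>)
    also have "\<dots> = t" using \<sigma>in[OF that] by simp
    finally show ?thesis using False by simp
  qed
  have dtau: "deriv \<tau> 0 = - h z0 / (2 * c^4)"
  proof -
    have dt: "(\<tau> has_field_derivative deriv \<tau> 0) (at 0)" using holomorphic_derivI[OF h\<tau>] \<rho>0 by simp
    have ds: "(\<sigma> has_field_derivative 1 / c) (at 0)" using holomorphic_derivI[OF h\<sigma> open_ball, of 0 UNIV] \<rho>0 d\<sigma>0 by simp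
    have dps: "(\<psi> has_field_derivative c * h z0 / (2 * g')) (at (\<sigma> 0))" using d\<psi> \<sigma>0 by simp
    have "((\<lambda>t. \<tau> t * \<psi> (\<sigma> t)) has_field_derivative
        (deriv \<tau> 0 * \<psi> (\<sigma> 0) + (c * h z0 / (2 * g') * (1 / c)) * \<tau> 0)) (at 0)"
      by (intro DERIV_mult dt DERIV_chain2[OF dps ds])
    moreover have "((\<lambda>t. \<tau> t * \<psi> (\<sigma> t)) has_field_derivative 0) (at 0)"
      by (rule has_field_derivative_transform_within_open[of "\<lambda>_. 1" 0 0 "ball 0 \<rho>0"])
        (use one \<rho>0 in auto)
    ultimately have "deriv \<tau> 0 * \<psi> (\<sigma> 0) + (c * h z0 / (2 * g') * (1 / c)) * \<tau> 0 = 0"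
      using DERIV_unique by blast
    then have "deriv \<tau> 0 * c + h z0 / (2 * c^3) = 0"
      using \<sigma>0 \<psi>0 \<tau>0 c by (simp add: g'_def field_simps power2_eq_square power3_eq_cube)
    then show ?thesis using c(2) by (simp add: field_simps power2_eq_square power3_eq_cube power4_eq_xxxx add_eq_0_iff)
  qed
  show ?thesis
    by (rule that[OF \<rho>0(1) h\<sigma> h\<tau> _ nrm main \<tau>0 dtau]) (use \<sigma>\<tau> in auto)
qed

lemma sq_real_nonneg_Im:
  fixes w :: complex
  assumes "w^2 = of_real s" "s \<ge> 0" shows "Im w = 0"
proof -
  have i: "Re w * Im w = 0"
    using arg_cong[OF assms(1), of Im] by (simp add: power2_eq_square) blast
  have j: "Re w * Re w - Im w * Im w = s"
    using arg_cong[OF assms(1), of Re] by (simp add: power2_eq_square)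
  show ?thesis
  proof (rule ccontr)
    assume "Im w \<noteq> 0"
    then have "Re w = 0" using i by simp
    then have "- (Im w * Im w) \<ge> 0" using j assms(2) by simp
    then show False using \<open>Im w \<noteq> 0\<close> using not_real_square_gt_zero[of "Im w"] by linarith
  qed
qed

lemma norm_key:
  fixes m :: complex
  assumes that: "Re m \<ge> 0"
  shows "norm (m^2 + of_real (norm (m^2))) = 2 * Re m * norm m"
proof -
  have "of_real (norm (m^2)) = m * cnj m" by (simp only: norm_power complex_norm_square)
  then have "m^2 + of_real (norm (m^2)) = m * (m + cnj m)"
    by (simp add: power2_eq_square algebra_simps)
  also have "\<dots> = m * of_real (2 * Re m)" by (simp add: complex_add_cnj)
  finally show ?thesis using that by (simp add: norm_mult)
qed

theorem mainTheorem1: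
  fixes g h p :: "complex \<Rightarrow> complex" and z0 d :: complex and r :: real
  assumes "r > 0"
    and "g holomorphic_on ball z0 r" and "h holomorphic_on ball z0 r"
    and "deriv g z0 \<noteq> 0" and "h z0 \<noteq> 0"
    and "pow32_branch p z0 r d"
  shows "\<exists>\<delta>>0. \<exists>G H q e.
     G holomorphic_on ball (g z0) \<delta> \<and> H holomorphic_on ball (g z0) \<delta> \<and>
     norm e = 1 \<and> pow32_branch q (g z0) \<delta> e \<and>
     (\<forall>\<epsilon>>0. \<exists>\<rho>>0. \<forall>u. u \<in> slit_disc (g z0) \<rho> e \<and>
          norm ((u - g z0) / complex_of_real (norm (u - g z0)) - e) \<ge> \<epsilon> \<longrightarrow>
          G u + H u * q u \<in> slit_disc z0 r d \<and>
          g (G u + H u * q u) + h (G u + H u * q u) * p (G u + H u * q u) = u) \<and>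
     G (g z0) = z0 \<and> deriv G (g z0) = 1 / deriv g z0 \<and>
     (\<exists>c. c^2 = deriv g z0 \<and> H (g z0) = - h z0 / c^5)"
proof -
  note r = assms(1) and hg = assms(2) and hh = assms(3) and g'nz = assms(4)
  have d0: "d \<noteq> 0" and hp: "p holomorphic_on slit_disc z0 r d"
    and psq: "\<And>z. z \<in> slit_disc z0 r d \<Longrightarrow> (p z)^2 = (z - z0)^3"
    using assms(6) by (auto simp: pow32_branch_def)
  define g' where "g' = deriv g z0"
  define c where "c = csqrt g'"
  have c2: "c^2 = g'" by (simp add: c_def)
  have c0: "c \<noteq> 0" using g'nz by (simp add: c_def g'_def)
  obtain \<rho>0 \<sigma> \<tau> where \<rho>0: "\<rho>0 > 0" and h\<sigma>: "\<sigma> holomorphic_on ball 0 \<rho>0"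
    and h\<tau>: "\<tau> holomorphic_on ball 0 \<rho>0"
    and \<sigma>\<tau>: "\<And>t. t \<in> ball 0 \<rho>0 \<Longrightarrow> \<sigma> t = t * \<tau> t"
    and \<sigma>n: "\<And>t. t \<in> ball 0 \<rho>0 \<Longrightarrow> norm (\<sigma> t) ^ 2 < r"
    and \<sigma>eq: "\<And>t. t \<in> ball 0 \<rho>0 \<Longrightarrow> g (z0 + \<sigma> t ^ 2) + h (z0 + \<sigma> t ^ 2) * \<sigma> t ^ 3 = g z0 + t^2"
    and \<tau>0: "\<tau> 0 = 1 / c" and d\<tau>0: "deriv \<tau> 0 = - h z0 / (2 * c^4)"
    using local_inv[OF r hg hh, of c] c2 c0 unfolding g'_def by metis
  have negb: "-t \<in> ball (0::complex) \<rho>0" if "t \<in> ball 0 \<rho>0" for t using that by (simp add: dist_norm)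
  define T where "T = (\<lambda>t. \<tau> t ^ 2)"
  have hT: "T holomorphic_on ball 0 \<rho>0" unfolding T_def by (intro holomorphic_intros h\<tau>)
  have hTm: "(\<lambda>t. T (-t)) holomorphic_on ball 0 \<rho>0"
    by (rule hol_comp[OF hT]) (auto intro: holomorphic_intros negb)
  define Te where "Te = (\<lambda>t. (T t + T (-t)) / 2)"
  define To where "To = (\<lambda>t. (T t - T (-t)) / 2)"
  have hTe: "Te holomorphic_on ball 0 \<rho>0" unfolding Te_def by (intro holomorphic_intros hT hTm) auto
  have hTo: "To holomorphic_on ball 0 \<rho>0" unfolding To_def by (intro holomorphic_intros hT hTm) auto
  have To0: "To 0 = 0" by (simp add: To_def)
  define R where "R = (\<lambda>t. if t = 0 then deriv To 0 else (To t - To 0) / (t - 0))"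
  have hR: "R holomorphic_on ball 0 \<rho>0"
    unfolding R_def by (rule pole_lemma[OF hTo]) (simp add: \<rho>0)
  have Te_ev: "Te (-t) = Te t" for t by (simp add: Te_def add.commute)
  have R_ev: "R (-t) = R t" for t
    by (cases "t = 0") (auto simp: R_def To_def field_simps)
  have TeTo: "T t = Te t + t * R t" for t
    by (cases "t = 0") (auto simp: R_def To_def Te_def field_simps)
  define A1 where "A1 = (\<lambda>w. Te (csqrt w))"
  define A2 where "A2 = (\<lambda>w. R (csqrt w))"
  have hA1: "A1 holomorphic_on ball 0 (\<rho>0^2)"
    unfolding A1_def by (rule even_sqrt_holo[OF hTe _ \<rho>0]) (simp add: Te_ev)
  have hA2: "A2 holomorphic_on ball 0 (\<rho>0^2)"
    unfolding A2_def by (rule even_sqrt_holo[OF hR _ \<rho>0]) (simp add: R_ev)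
  have A1sq: "A1 (t^2) = Te t" for t
  proof -
    have "csqrt (t^2) = t \<or> csqrt (t^2) = -t" by (rule sq_eq_cases) simp
    then show ?thesis unfolding A1_def using Te_ev by auto
  qed
  have A2sq: "A2 (t^2) = R t" for t
  proof -
    have "csqrt (t^2) = t \<or> csqrt (t^2) = -t" by (rule sq_eq_cases) simp
    then show ?thesis unfolding A2_def using R_ev by auto
  qed
  define u0 where "u0 = g z0"
  define \<delta> where "\<delta> = \<rho>0^2"
  have \<delta>: "\<delta> > 0" using \<rho>0 by (simp add: \<delta>_def)
  define G where "G = (\<lambda>u. z0 + (u - u0) * A1 (u - u0))"
  define H where "H = (\<lambda>u. A2 (u - u0))"
  have shiftb: "u - u0 \<in> ball 0 \<delta>" if "u \<in> ball u0 \<delta>" for u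
    using that by (simp add: dist_norm norm_minus_commute)
  have hG: "G holomorphic_on ball u0 \<delta>"
    unfolding G_def by (intro holomorphic_intros hol_comp[OF hA1]) (use shiftb \<delta>_def in auto)
  have hH: "H holomorphic_on ball u0 \<delta>"
    unfolding H_def by (intro holomorphic_intros hol_comp[OF hA2]) (use shiftb \<delta>_def in auto)
  have G0: "G u0 = z0" by (simp add: G_def)
  have dG: "deriv G u0 = 1 / g'"
  proof -
    have dA: "(A1 has_field_derivative deriv A1 0) (at (u0 - u0))"
      using holomorphic_derivI[OF hA1 open_ball, of 0 UNIV] \<rho>0 by simp
    have di: "((\<lambda>u. u - u0) has_field_derivative 1) (at u0)"
      by (auto intro!: derivative_eq_intros)
    have dA': "((\<lambda>u. A1 (u - u0)) has_field_derivative deriv A1 0 * 1) (at u0)"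
      using DERIV_chain2[where f=A1 and g="\<lambda>u. u - u0" and x=u0, OF dA di] .
    have "(G has_field_derivative (0 + (1 * A1 (u0 - u0) + deriv A1 0 * 1 * (u0 - u0)))) (at u0)"
      unfolding G_def by (intro DERIV_add DERIV_const DERIV_mult di dA')
    then have "deriv G u0 = A1 0" by (simp add: DERIV_imp_deriv)
    also have "A1 0 = Te 0" using A1sq[of 0] by simp
    also have "\<dots> = 1 / g'" using \<tau>0 c2 by (simp add: Te_def T_def power_divide)
    finally show ?thesis .
  qed
  have H0: "H u0 = - h z0 / c^5"
  proof -
    have dT: "(T has_field_derivative 2 * \<tau> 0 * deriv \<tau> 0) (at 0)"
    proof -
      have "(\<tau> has_field_derivative deriv \<tau> 0) (at 0)"
        using holomorphic_derivI[OF h\<tau> open_ball, of 0 UNIV] \<rho>0 by simp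
      from DERIV_power[OF this, of 2] show ?thesis unfolding T_def by (simp add: mult_ac)
    qed
    have dTm: "((\<lambda>t. T (-t)) has_field_derivative 2 * \<tau> 0 * deriv \<tau> 0 * (-1)) (at 0)"
      using DERIV_chain2[where f=T and g="\<lambda>t. -t" and x=0, OF _ DERIV_minus[OF DERIV_ident]] dT by simp
    have "(To has_field_derivative (2 * \<tau> 0 * deriv \<tau> 0 - 2 * \<tau> 0 * deriv \<tau> 0 * (-1)) / 2) (at 0)"
      unfolding To_def by (intro DERIV_cdivide DERIV_diff dT dTm)
    then have "deriv To 0 = 2 * \<tau> 0 * deriv \<tau> 0" by (simp add: DERIV_imp_deriv)
    moreover have "H u0 = deriv To 0" using A2sq[of 0] by (simp add: H_def R_def)
    ultimately show ?thesis using \<tau>0 d\<tau>0 c0 by (simp add: field_simps eval_nat_numeral mult_ac)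
  qed

  define S where "S = (\<lambda>z. p z / (z - z0))"
  define \<beta> where "\<beta> = csqrt d"
  have \<beta>2: "\<beta>^2 = d" by (simp add: \<beta>_def)
  have \<beta>0: "\<beta> \<noteq> 0" using d0 by (simp add: \<beta>_def)
  define SD where "SD = slit_disc z0 r d"
  have z0n: "z \<noteq> z0" if "z \<in> SD" for z
  proof
    assume "z = z0"
    then have "z = z0 + complex_of_real 0 * d" by simp
    then show False using that by (auto simp: SD_def slit_disc_def)
  qed
  have Ssq: "S z ^ 2 = z - z0" if "z \<in> SD" for z
  proof -
    have "S z ^ 2 = (z - z0)^3 / (z - z0)^2"
      using psq[of z] that by (simp add: S_def SD_def power_divide)
    also have "\<dots> = z - z0"
    proof -
      have y: "z - z0 \<noteq> 0" using z0n[OF that] by simp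
      have "(z - z0)^3 = (z - z0) * (z - z0)^2" by (simp add: eval_nat_numeral)
      then show ?thesis using y by simp
    qed
    finally show ?thesis .
  qed
  have SIm: "Im (S z / \<beta>) \<noteq> 0" if zS: "z \<in> SD" for z
  proof
    assume im: "Im (S z / \<beta>) = 0"
    define w where "w = S z / \<beta>"
    have "w = of_real (Re w)" using im by (simp add: w_def complex_eq_iff)
    then have "w^2 = of_real (Re w ^ 2)" by (metis of_real_power)
    moreover have "w^2 = (z - z0) / d" using Ssq[OF zS] \<beta>2 by (simp add: w_def power_divide)
    ultimately have "z - z0 = of_real (Re w ^ 2) * d" using d0 by (simp add: field_simps)
    then have "z = z0 + of_real (Re w ^ 2) * d" by (simp add: algebra_simps)
    moreover have "Re w ^ 2 \<ge> 0" by simp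
    ultimately show False using zS unfolding SD_def slit_disc_def by blast
  qed
  have contF: "continuous_on SD (\<lambda>z. Im (S z / \<beta>))"
  proof -
    have "continuous_on SD p" using hp holomorphic_on_imp_continuous_on by (simp add: SD_def)
    then show ?thesis unfolding S_def
      by (intro continuous_intros) (use z0n \<beta>0 in auto)
  qed
  have conn: "connected SD" unfolding SD_def by (rule starlike_imp_connected[OF slit_starlike[OF d0 r]])
  obtain z1 where z1: "z1 \<in> SD" using slit_starlike[OF d0 r] unfolding starlike_def SD_def by blast
  define \<kappa>r where "\<kappa>r = (if Im (S z1 / \<beta>) > 0 then 1 else -1 :: real)"
  have \<kappa>pos: "\<kappa>r * Im (S z / \<beta>) > 0" if "z \<in> SD" for z
  proof -
    have "Im (S z / \<beta>) * Im (S z1 / \<beta>) > 0"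
      by (rule sign_const[OF conn contF SIm z1 that])
    then show ?thesis unfolding \<kappa>r_def by (auto simp: zero_less_mult_iff)
  qed
  have \<kappa>sq: "\<kappa>r * \<kappa>r = 1" by (simp add: \<kappa>r_def)
  define \<kappa> where "\<kappa> = complex_of_real \<kappa>r"
  have \<kappa>sqc: "\<kappa> * \<kappa> = 1" using \<kappa>sq by (metis \<kappa>_def of_real_1 of_real_mult)
  define N where "N = norm (g' * d)"
  have N0: "N > 0" using g'nz d0 by (simp add: N_def g'_def)
  define e where "e = (g' * d) / of_real N"
  have ne: "norm e = 1" using N0 by (simp add: e_def N_def norm_divide)
  have gde: "g' * d = of_real N * e" using N0 by (simp add: e_def)
  have e0: "e \<noteq> 0" using ne by auto
  define tt where "tt = (\<lambda>u. c * \<beta> * \<kappa> * \<i> * csqrt (- (u - u0) / (g' * d)))"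
  define q where "q = (\<lambda>u. tt u ^ 3)"
  have tt2: "tt u ^ 2 = u - u0" for u
  proof -
    have "tt u ^ 2 = c^2 * \<beta>^2 * (\<kappa> * \<kappa>) * \<i>^2 * (- (u - u0) / (g' * d))"
      by (simp add: tt_def power_mult_distrib power2_eq_square[of \<kappa>])
    also have "\<dots> = u - u0" using c2 \<beta>2 \<kappa>sqc g'nz d0 by (simp add: g'_def field_simps)
    finally show ?thesis .
  qed
  have Xnp: "- (u - u0) / (g' * d) \<notin> \<real>\<^sub>\<le>\<^sub>0" if uS: "u \<in> slit_disc u0 \<rho> e" for u \<rho>
  proof
    assume "- (u - u0) / (g' * d) \<in> \<real>\<^sub>\<le>\<^sub>0"
    then obtain x where x: "x \<le> 0" "- (u - u0) / (g' * d) = of_real x"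
      unfolding complex_nonpos_Reals_iff by (metis complex_eq_iff of_real_Re Im_complex_of_real Re_complex_of_real)
    then have "u - u0 = - of_real x * (g' * d)" using g'nz d0 by (simp add: g'_def field_simps)
    also have "\<dots> = of_real (- x * N) * e" by (simp add: gde)
    finally have "u = u0 + of_real (- x * N) * e" by (simp add: algebra_simps)
    moreover have "- x * N \<ge> 0" using x N0 by (simp add: mult_nonpos_nonneg)
    ultimately show False using uS unfolding slit_disc_def by blast
  qed
  have pq: "pow32_branch q u0 \<delta> e"
    unfolding pow32_branch_def
  proof (intro conjI ballI)
    show "e \<noteq> 0" by (rule e0)
    show "q holomorphic_on slit_disc u0 \<delta> e"
      unfolding q_def tt_def by (intro holomorphic_intros) (use Xnp g'nz d0 in \<open>auto simp: g'_def\<close>)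
    fix u assume "u \<in> slit_disc u0 \<delta> e"
    show "(q u)^2 = (u - u0)^3" unfolding q_def using tt2[of u]
      by (metis power_mult mult.commute)
  qed
  have key: "\<exists>\<rho>>0. \<forall>u. u \<in> slit_disc u0 \<rho> e \<and>
          norm ((u - u0) / complex_of_real (norm (u - u0)) - e) \<ge> \<epsilon> \<longrightarrow>
          G u + H u * q u \<in> slit_disc z0 r d \<and>
          g (G u + H u * q u) + h (G u + H u * q u) * p (G u + H u * q u) = u" if \<epsilon>: "\<epsilon> > 0" for \<epsilon>
  proof -
    have "isCont \<tau> 0"
      using holomorphic_on_imp_continuous_on[OF h\<tau>] \<rho>0 continuous_on_eq_continuous_at[of "ball 0 \<rho>0" \<tau>] by simp
    moreover have ec: "\<epsilon> / (2 * norm c) > 0" using \<epsilon> c0 by simp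
    ultimately obtain \<rho>1 where \<rho>1: "\<rho>1 > 0" "\<And>t. dist t 0 < \<rho>1 \<Longrightarrow> dist (\<tau> t) (\<tau> 0) < \<epsilon> / (2 * norm c)"
      unfolding continuous_at_eps_delta by blast
    define \<rho>' where "\<rho>' = min \<rho>1 \<rho>0"
    have \<rho>': "\<rho>' > 0" using \<rho>1 \<rho>0 by (simp add: \<rho>'_def)
    show ?thesis
    proof (intro exI[of _ "\<rho>'^2"] conjI allI impI)
      show "\<rho>'^2 > 0" using \<rho>' by simp
      fix u assume uA: "u \<in> slit_disc u0 (\<rho>'^2) e \<and> \<epsilon> \<le> norm ((u - u0) / complex_of_real (norm (u - u0)) - e)"
      then have uS: "u \<in> slit_disc u0 (\<rho>'^2) e" and uE: "\<epsilon> \<le> norm ((u - u0) / complex_of_real (norm (u - u0)) - e)"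
        by auto
      define W where "W = u - u0"
      have W0: "W \<noteq> 0"
      proof
        assume "W = 0"
        then have "u = u0 + complex_of_real 0 * e" by (simp add: W_def)
        then show False using uS by (auto simp: slit_disc_def)
      qed
      have nW: "norm W < \<rho>'^2" using uS by (simp add: slit_disc_def W_def dist_norm norm_minus_commute)
      define t where "t = tt u"
      have t2: "t^2 = W" by (simp add: t_def W_def tt2)
      have nt: "norm t < \<rho>'"
      proof -
        have "norm t ^ 2 < \<rho>' ^ 2" using nW t2 by (metis norm_power)
        then show ?thesis using \<rho>' by (meson norm_ge_zero power_less_imp_less_base less_imp_le)
      qed
      have tb: "t \<in> ball 0 \<rho>0" using nt by (simp add: \<rho>'_def)
      have t\<rho>1: "dist t 0 < \<rho>1" using nt by (simp add: \<rho>'_def)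
      define X where "X = - W / (g' * d)"
      define m where "m = csqrt X"
      have tm: "t = c * \<beta> * \<kappa> * \<i> * m" by (simp add: t_def tt_def m_def X_def W_def)
      have Xn: "X \<notin> \<real>\<^sub>\<le>\<^sub>0" using Xnp[OF uS] by (simp add: X_def W_def)
      have X0: "X \<noteq> 0" using W0 g'nz d0 by (simp add: X_def g'_def)
      have m0: "m \<noteq> 0" using X0 by (simp add: m_def)
      have Rem: "Re m > 0"
      proof (rule ccontr)
        assume "\<not> Re m > 0"
        then have "Re m = 0" using csqrt_principal[of X] by (simp add: m_def)
        then have "m = \<i> * of_real (Im m)" by (simp add: complex_eq_iff)
        then have "X = - of_real (Im m ^ 2)" unfolding m_def
          by (metis power2_csqrt power_mult_distrib power2_i mult_minus1 of_real_power)
        then have "X \<in> \<real>\<^sub>\<le>\<^sub>0" by (simp add: complex_nonpos_Reals_iff)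
        then show False using Xn by simp
      qed
      have Xm: "X = m^2" by (simp add: m_def)
      have bound: "\<epsilon> * norm m \<le> 2 * Re m"
      proof -
        have gd0: "g' * d \<noteq> 0" using g'nz d0 by (simp add: g'_def)
        have "- X * of_real N * e = - X * (g' * d)" by (simp add: gde mult.assoc)
        also have "\<dots> = W" using gd0 by (simp add: X_def)
        finally have WX: "W = - X * of_real N * e" by simp
        have nWX: "norm W = norm X * N" using WX ne N0 by (simp add: norm_mult)
        have "W / of_real (norm W) - e = - e * (X + of_real (norm X)) / of_real (norm X)"
          using X0 N0 unfolding nWX by (simp add: WX field_simps)
        then have "norm (W / of_real (norm W) - e) = norm (X + of_real (norm X)) / norm X"
          using ne by (simp add: norm_mult norm_divide)
        also have "\<dots> = 2 * Re m * norm m / norm m ^ 2"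
          using norm_key[of m] Rem by (simp add: Xm norm_power)
        also have "\<dots> = 2 * Re m / norm m" using m0 by (simp add: power2_eq_square)
        finally have "\<epsilon> \<le> 2 * Re m / norm m" using uE by (simp add: W_def)
        then show ?thesis using m0 by (simp add: field_simps)
      qed
      define sv where "sv = \<sigma> t"
      have svt: "sv = t * \<tau> t" using \<sigma>\<tau>[OF tb] by (simp add: sv_def)
      have ct: "norm (c * \<tau> t - 1) < \<epsilon> / 2"
      proof -
        have "c * \<tau> t - 1 = c * (\<tau> t - \<tau> 0)" using \<tau>0 c0 by (simp add: algebra_simps)
        then have "norm (c * \<tau> t - 1) = norm c * dist (\<tau> t) (\<tau> 0)" by (simp add: norm_mult dist_norm)
        also have "\<dots> < norm c * (\<epsilon> / (2 * norm c))"
          using \<rho>1(2)[OF t\<rho>1] c0 by (intro mult_strict_left_mono) auto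
        also have "\<dots> = \<epsilon> / 2" using c0 by simp
        finally show ?thesis .
      qed
      have svpos: "\<kappa>r * Im (sv / \<beta>) > 0"
      proof -
        have "\<kappa> * (sv / \<beta>) = (\<kappa> * \<kappa>) * \<i> * (m * (c * \<tau> t))"
          using \<beta>0 by (simp add: svt tm field_simps)
        also have "\<dots> = \<i> * (m + m * (c * \<tau> t - 1))" using \<kappa>sqc by (simp add: algebra_simps)
        finally have eq: "\<kappa> * (sv / \<beta>) = \<i> * (m + m * (c * \<tau> t - 1))" .
        have "Im (\<kappa> * (sv / \<beta>)) = Re (m + m * (c * \<tau> t - 1))"
          using arg_cong[OF eq, of Im] by (simp only: Im_i_times)
        then have "Im (\<kappa> * (sv / \<beta>)) = Re m + Re (m * (c * \<tau> t - 1))" by (simp only: plus_complex.sel)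
        moreover have "Im (\<kappa> * (sv / \<beta>)) = \<kappa>r * Im (sv / \<beta>)"
        proof -
          have "Im (complex_of_real \<kappa>r * w) = \<kappa>r * Im w" for w by simp
          then show ?thesis unfolding \<kappa>_def by blast
        qed
        ultimately have "\<kappa>r * Im (sv / \<beta>) = Re m + Re (m * (c * \<tau> t - 1))" by simp
        moreover have "Re (m * (c * \<tau> t - 1)) > - (norm m * (\<epsilon> / 2))"
        proof -
          have "norm (m * (c * \<tau> t - 1)) < norm m * (\<epsilon> / 2)"
            unfolding norm_mult using ct m0 by (intro mult_strict_left_mono) auto
          then show ?thesis using abs_Re_le_cmod[of "m * (c * \<tau> t - 1)"] by linarith
        qed
        moreover have "norm m * (\<epsilon> / 2) = (\<epsilon> * norm m) / 2" by simp
        ultimately show ?thesis using bound Rem by linarith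
      qed
      define z where "z = z0 + sv^2"
      have Gz: "G u + H u * q u = z"
      proof -
        have "G u + H u * q u = z0 + t^2 * Te t + R t * t^3"
          by (simp add: G_def H_def q_def t_def[symmetric] W_def[symmetric] t2[symmetric] A1sq A2sq)
        also have "\<dots> = z0 + t^2 * T t" by (simp add: TeTo algebra_simps eval_nat_numeral)
        also have "\<dots> = z" by (simp add: z_def svt T_def power_mult_distrib)
        finally show ?thesis .
      qed
      have zS: "z \<in> SD"
      proof -
        have "dist z0 z < r" using \<sigma>n[OF tb] by (simp add: z_def dist_norm norm_power sv_def)
        moreover have "z \<noteq> z0 + complex_of_real s * d" if s: "s \<ge> 0" for s
        proof
          assume "z = z0 + complex_of_real s * d"
          then have "sv^2 = of_real s * \<beta>^2" by (simp add: z_def \<beta>2)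
          then have "(sv / \<beta>)^2 = of_real s" using \<beta>0 by (simp add: power_divide)
          then have "Im (sv / \<beta>) = 0" using sq_real_nonneg_Im s by blast
          then show False using svpos by simp
        qed
        ultimately show ?thesis by (auto simp: SD_def slit_disc_def)
      qed
      have Sz: "S z = sv"
      proof -
        have "S z ^ 2 = sv ^ 2" using Ssq[OF zS] by (simp add: z_def)
        then have "S z = sv \<or> S z = - sv" by (rule sq_eq_cases)
        moreover have "S z \<noteq> - sv"
        proof
          assume "S z = - sv"
          then have "\<kappa>r * Im (S z / \<beta>) = - (\<kappa>r * Im (sv / \<beta>))" by simp
          then show False using \<kappa>pos[OF zS] svpos by simp
        qed
        ultimately show ?thesis by blast
      qed
      have pz: "p z = sv ^ 3"
      proof -
        have "p z = S z * (z - z0)" using z0n[OF zS] by (simp add: S_def)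
        then show ?thesis using Sz by (simp add: z_def eval_nat_numeral)
      qed
      have "g z + h z * p z = u"
        using \<sigma>eq[OF tb] pz by (simp add: z_def sv_def t2 W_def u0_def)
      then show "g (G u + H u * q u) + h (G u + H u * q u) * p (G u + H u * q u) = u"
        using Gz by simp
      show "G u + H u * q u \<in> slit_disc z0 r d"
        using Gz zS by (simp add: SD_def)
    qed
  qed
  show ?thesis
    apply (rule exI[of _ \<delta>], intro conjI \<delta>)
    apply (rule exI[of _ G], rule exI[of _ H], rule exI[of _ q], rule exI[of _ e])
    using hG hH ne pq key G0 dG H0 c2 unfolding u0_def g'_def by blast
qed

end
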